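(* Let $G$ be a simple undirected graph on $\{1,\dots,n\}$ ($n\ge2$) with adjacency $g_{ij}$ ($g_{ii}=0$) and $m$ edges. Suppose the potential outcomes are $Y_i(\mathbf z)=\alpha_i+\beta_iz_i+\gamma\sum_jg_{ij}z_j$ for constants $\alpha_i,\beta_i,\gamma$. Under a completely randomized design with $n_t$ treated units, $1\le n_t\le n-1$, the estimator $$\hat\beta_{naive}=\frac{\sum_i Y_i^{obs}Z_i}{\sum_i Z_i}-\frac{\sum_i Y_i^{obs}(1-Z_i)}{\sum_i(1-Z_i)}$$ satisfies $\mathbb E[\hat\beta_{naive}]-\mathrm{DTE}=-\gamma\frac{2m}{n(n-1)}$, where $\mathrm{DTE}=\frac1n\sum_i\beta_i$ is the direct treatment effect (the average of $Y_i$ with unit $i$ treated and no neighbor treated minus $Y_i$ with no unit treated).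
   Context: Completely randomized design: $\mathbf Z$ is uniform over vectors in $\{0,1\}^n$ with exactly $n_t$ ones. $Y_i^{obs}=Y_i(\mathbf Z)$. *)

theory Defs
  imports "HOL-Probability.Probability"
begin

definition assignments :: "nat \<Rightarrow> nat \<Rightarrow> (nat \<Rightarrow> real) set" where
  "assignments n nt = {z. (\<forall>i\<in>{1..n}. z i \<in> {0,1}) \<and> (\<forall>i. i \<notin> {1..n} \<longrightarrow> z i = 0)
       \<and> card {i\<in>{1..n}. z i = 1} = nt}"

definition crd :: "nat \<Rightarrow> nat \<Rightarrow> (nat \<Rightarrow> real) pmf" where
  "crd n nt = pmf_of_set (assignments n nt)"

definition simple_graph :: "nat \<Rightarrow> (nat \<Rightarrow> nat \<Rightarrow> bool) \<Rightarrow> bool" where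
  "simple_graph n g \<longleftrightarrow> (\<forall>i\<in>{1..n}. \<not> g i i) \<and> (\<forall>i\<in>{1..n}. \<forall>j\<in>{1..n}. g i j \<longleftrightarrow> g j i)"

definition adj :: "(nat \<Rightarrow> nat \<Rightarrow> bool) \<Rightarrow> nat \<Rightarrow> nat \<Rightarrow> real" where
  "adj g i j = (if g i j then 1 else 0)"

definition num_edges :: "nat \<Rightarrow> (nat \<Rightarrow> nat \<Rightarrow> bool) \<Rightarrow> nat" where
  "num_edges n g = card {{i, j} | i j. i \<in> {1..n} \<and> j \<in> {1..n} \<and> g i j}"

text \<open>Naive difference-in-means estimator; Y i z is the potential outcome of unit i.\<close>
definition beta_naive :: "nat \<Rightarrow> (nat \<Rightarrow> (nat \<Rightarrow> real) \<Rightarrow> real) \<Rightarrow> (nat \<Rightarrow> real) \<Rightarrow> real" where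
  "beta_naive n Y z =
     (\<Sum>i\<in>{1..n}. Y i z * z i) / (\<Sum>i\<in>{1..n}. z i)
   - (\<Sum>i\<in>{1..n}. Y i z * (1 - z i)) / (\<Sum>i\<in>{1..n}. 1 - z i)"

definition DTE :: "nat \<Rightarrow> (nat \<Rightarrow> (nat \<Rightarrow> real) \<Rightarrow> real) \<Rightarrow> real" where
  "DTE n Y = (1 / real n) * (\<Sum>i\<in>{1..n}. Y i (\<lambda>j. if j = i then 1 else 0) - Y i (\<lambda>j. 0))"

end

theory Submission
  imports Defs
begin

lemma card_supsets:
  assumes U: "finite U" and B: "B \<subseteq> U" and k: "card B \<le> k"
  shows "card {A. A \<subseteq> U \<and> card A = k \<and> B \<subseteq> A} = (card U - card B) choose (k - card B)"
proof -
  have fB: "finite B" using U B finite_subset by blast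
  have "bij_betw (\<lambda>A. A - B) {A. A \<subseteq> U \<and> card A = k \<and> B \<subseteq> A} {C. C \<subseteq> U - B \<and> card C = k - card B}"
  proof (rule bij_betw_byWitness[where f'="\<lambda>C. C \<union> B"])
    show "\<forall>a\<in>{A. A \<subseteq> U \<and> card A = k \<and> B \<subseteq> A}. a - B \<union> B = a" by auto
    show "\<forall>a'\<in>{C. C \<subseteq> U - B \<and> card C = k - card B}. a' \<union> B - B = a'" by auto
    show "(\<lambda>A. A - B) ` {A. A \<subseteq> U \<and> card A = k \<and> B \<subseteq> A} \<subseteq> {C. C \<subseteq> U - B \<and> card C = k - card B}"
    proof clarify
      fix A assume "A \<subseteq> U" "B \<subseteq> A" "k = card A"
      then show "A - B \<subseteq> U - B \<and> card (A - B) = card A - card B"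
        using fB by (auto simp: card_Diff_subset)
    qed
    show "(\<lambda>C. C \<union> B) ` {C. C \<subseteq> U - B \<and> card C = k - card B} \<subseteq> {A. A \<subseteq> U \<and> card A = k \<and> B \<subseteq> A}"
    proof clarify
      fix C assume C: "C \<subseteq> U - B" "card C = k - card B"
      have fC: "finite C" using C U finite_subset by blast
      have "card (C \<union> B) = card C + card B" using C fC fB by (subst card_Un_disjoint) auto
      then show "C \<union> B \<subseteq> U \<and> card (C \<union> B) = k \<and> B \<subseteq> C \<union> B" using C B k by auto
    qed
  qed
  then have "card {A. A \<subseteq> U \<and> card A = k \<and> B \<subseteq> A} = card {C. C \<subseteq> U - B \<and> card C = k - card B}"
    by (rule bij_betw_same_card)
  also have "\<dots> = card (U - B) choose (k - card B)" using U by (simp add: n_subsets)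
  also have "card (U - B) = card U - card B" using B fB by (simp add: card_Diff_subset)
  finally show ?thesis .
qed

lemma card_supsets0:
  assumes U: "finite U" and k: "card B > k"
  shows "{A. A \<subseteq> U \<and> card A = k \<and> B \<subseteq> A} = {}"
  using k U by auto (metis card_mono finite_subset leD)

definition ind :: "nat set \<Rightarrow> nat \<Rightarrow> real" where
  "ind A = (\<lambda>j. if j \<in> A then 1 else 0)"

lemma inj_ind: "inj ind"
  unfolding inj_def ind_def by (metis (full_types) subsetI subset_antisym zero_neq_one)

lemma assignments_eq:
  "assignments n nt = ind ` {A. A \<subseteq> {1..n} \<and> card A = nt}"
proof
  show "assignments n nt \<subseteq> ind ` {A. A \<subseteq> {1..n} \<and> card A = nt}"
  proof
    fix z assume z: "z \<in> assignments n nt"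
    let ?A = "{i\<in>{1..n}. z i = 1}"
    have "z = ind ?A"
    proof
      fix j show "z j = ind ?A j" using z unfolding assignments_def ind_def
        by (cases "j \<in> {1..n}") auto
    qed
    moreover have "?A \<in> {A. A \<subseteq> {1..n} \<and> card A = nt}" using z unfolding assignments_def by auto
    ultimately show "z \<in> ind ` {A. A \<subseteq> {1..n} \<and> card A = nt}" by blast
  qed
  show "ind ` {A. A \<subseteq> {1..n} \<and> card A = nt} \<subseteq> assignments n nt"
  proof
    fix z assume "z \<in> ind ` {A. A \<subseteq> {1..n} \<and> card A = nt}"
    then obtain A where A: "A \<subseteq> {1..n}" "card A = nt" and z: "z = ind A" by auto
    have "{i\<in>{1..n}. ind A i = 1} = A" using A by (auto simp: ind_def)
    then show "z \<in> assignments n nt" using A unfolding assignments_def z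
      by (simp add: ind_def) (use A in auto)
  qed
qed

definition subs :: "nat \<Rightarrow> nat \<Rightarrow> nat set set" where
  "subs n nt = {A. A \<subseteq> {1..n} \<and> card A = nt}"

lemma finite_subs: "finite (subs n nt)"
  unfolding subs_def by (rule finite_subset[of _ "Pow {1..n}"]) auto

lemma card_subs: "card (subs n nt) = n choose nt"
  unfolding subs_def using n_subsets[of "{1..n}" nt] by simp

lemma sum_indicator_subs:
  "(\<Sum>A\<in>subs n nt. (if B \<subseteq> A then 1 else 0 :: real)) = real (card {A. A \<subseteq> {1..n} \<and> card A = nt \<and> B \<subseteq> A})"
proof -
  have "(\<Sum>A\<in>subs n nt. (if B \<subseteq> A then 1 else 0 :: real)) = (\<Sum>A\<in>{A\<in>subs n nt. B \<subseteq> A}. 1)"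
    by (rule sum.inter_filter[OF finite_subs, symmetric])
  also have "{A\<in>subs n nt. B \<subseteq> A} = {A. A \<subseteq> {1..n} \<and> card A = nt \<and> B \<subseteq> A}"
    unfolding subs_def by auto
  finally show ?thesis by simp
qed

lemma K1:
  assumes "i \<in> {1..n}" "1 \<le> nt"
  shows "(\<Sum>A\<in>subs n nt. ind A i) * real n = real nt * real (n choose nt)"
proof -
  have "(\<Sum>A\<in>subs n nt. ind A i) = (\<Sum>A\<in>subs n nt. (if {i} \<subseteq> A then 1 else 0 :: real))"
    by (simp add: ind_def)
  also have "\<dots> = real ((n - 1) choose (nt - 1))"
    using sum_indicator_subs[where n=n and nt=nt and B="{i}"] card_supsets[where U="{1..n}" and B="{i}" and k=nt] assms by simp
  finally have "(\<Sum>A\<in>subs n nt. ind A i) = real ((n - 1) choose (nt - 1))" .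
  moreover have "nt * (n choose nt) = n * ((n - 1) choose (nt - 1))"
    using times_binomial_minus1_eq[of nt n] assms by simp
  ultimately show ?thesis by (metis mult.commute of_nat_mult)
qed

lemma K2:
  assumes "i \<in> {1..n}" "j \<in> {1..n}" "i \<noteq> j" "1 \<le> nt"
  shows "(\<Sum>A\<in>subs n nt. ind A i * ind A j) * (real n * (real n - 1)) = real nt * (real nt - 1) * real (n choose nt)"
proof -
  have "(\<Sum>A\<in>subs n nt. ind A i * ind A j) = (\<Sum>A\<in>subs n nt. (if {i,j} \<subseteq> A then 1 else 0 :: real))"
    by (rule sum.cong) (auto simp: ind_def)
  also have "\<dots> = real (card {A. A \<subseteq> {1..n} \<and> card A = nt \<and> {i,j} \<subseteq> A})"
    by (rule sum_indicator_subs)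
  finally have e: "(\<Sum>A\<in>subs n nt. ind A i * ind A j) = real (card {A. A \<subseteq> {1..n} \<and> card A = nt \<and> {i,j} \<subseteq> A})" .
  have cB: "card {i,j} = 2" using assms by simp
  show ?thesis
  proof (cases "nt = 1")
    case True
    then have "{A. A \<subseteq> {1..n} \<and> card A = nt \<and> {i,j} \<subseteq> A} = {}"
      using card_supsets0[of "{1..n}" nt "{i,j}"] cB by simp
    then show ?thesis using e True by simp
  next
    case False
    then have nt2: "nt \<ge> 2" using assms by simp
    have cK: "card {A. A \<subseteq> {1..n} \<and> card A = nt \<and> {i,j} \<subseteq> A} = (n - 2) choose (nt - 2)"
      using card_supsets[where U="{1..n}" and B="{i,j}" and k=nt] cB nt2 assms by simp
    have n2: "n \<ge> 2" using assms by auto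
    have a: "nt * (n choose nt) = n * ((n - 1) choose (nt - 1))"
      using times_binomial_minus1_eq[of nt n] assms by simp
    have b: "(nt - 1) * ((n - 1) choose (nt - 1)) = (n - 1) * ((n - 1 - 1) choose (nt - 1 - 1))"
      using times_binomial_minus1_eq[of "nt - 1" "n - 1"] nt2 by simp
    have "real nt * (real nt - 1) * real (n choose nt) = real (nt * (nt - 1) * (n choose nt))"
      using nt2 by (simp add: of_nat_diff)
    also have "nt * (nt - 1) * (n choose nt) = n * ((nt - 1) * ((n - 1) choose (nt - 1)))"
      using a by (metis mult.assoc mult.commute)
    also have "\<dots> = n * ((n - 1) * ((n - 2) choose (nt - 2)))"
    proof -
      have e1: "n - 1 - 1 = n - 2" "nt - 1 - 1 = nt - 2" by auto
      show ?thesis using b unfolding e1 by simp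
    qed
    finally have f: "real nt * (real nt - 1) * real (n choose nt) = real (n * ((n - 1) * ((n - 2) choose (nt - 2))))" .
    have "real (n - 1) = real n - 1" using n2 by (simp add: of_nat_diff)
    then have g: "real (n * ((n - 1) * ((n - 2) choose (nt - 2)))) = real ((n - 2) choose (nt - 2)) * (real n * (real n - 1))"
      by simp
    show ?thesis unfolding e cK f by (rule g[symmetric])
  qed
qed

lemma edges_sum:
  assumes sg: "simple_graph n g"
  shows "(\<Sum>i\<in>{1..n}. \<Sum>j\<in>{1..n}. adj g i j) = 2 * real (num_edges n g)"
proof -
  let ?U = "{1..n}"
  let ?P = "{p\<in>?U \<times> ?U. g (fst p) (snd p)}"
  let ?P1 = "{p\<in>?U \<times> ?U. g (fst p) (snd p) \<and> fst p < snd p}"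
  let ?P2 = "{p\<in>?U \<times> ?U. g (fst p) (snd p) \<and> snd p < fst p}"
  have irr: "\<And>i. i \<in> ?U \<Longrightarrow> \<not> g i i" and sym: "\<And>i j. i \<in> ?U \<Longrightarrow> j \<in> ?U \<Longrightarrow> g i j = g j i"
    using sg unfolding simple_graph_def by auto
  have "(\<Sum>i\<in>?U. \<Sum>j\<in>?U. adj g i j) = (\<Sum>p\<in>?U \<times> ?U. adj g (fst p) (snd p))"
    by (simp add: sum.cartesian_product case_prod_beta')
  also have "\<dots> = (\<Sum>p\<in>?U \<times> ?U. if g (fst p) (snd p) then 1 else 0)"
    by (simp add: adj_def)
  also have "\<dots> = (\<Sum>p\<in>?P. 1)"
    by (rule sum.inter_filter[symmetric]) simp
  also have "\<dots> = real (card ?P)" by simp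
  also have "?P = ?P1 \<union> ?P2"
  proof (rule set_eqI)
    fix p show "p \<in> ?P \<longleftrightarrow> p \<in> ?P1 \<union> ?P2"
      using irr[of "fst p"] by (cases "fst p < snd p") (auto simp: not_less_iff_gr_or_eq)
  qed
  also have "card (?P1 \<union> ?P2) = card ?P1 + card ?P2"
    by (rule card_Un_disjoint) (auto intro: finite_subset[of _ "?U \<times> ?U"])
  also have "card ?P2 = card ?P1"
  proof (rule bij_betw_same_card[of "\<lambda>p. (snd p, fst p)"])
    show "bij_betw (\<lambda>p. (snd p, fst p)) ?P2 ?P1"
      by (rule bij_betw_byWitness[where f'="\<lambda>p. (snd p, fst p)"]) (auto simp: sym)
  qed
  also have "card ?P1 = num_edges n g"
  proof -
    have "bij_betw (\<lambda>p. {fst p, snd p}) ?P1 {{i, j} | i j. i \<in> ?U \<and> j \<in> ?U \<and> g i j}"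
    proof (rule bij_betw_imageI)
      show "inj_on (\<lambda>p. {fst p, snd p}) ?P1"
        by (rule inj_onI) (auto simp: doubleton_eq_iff prod_eq_iff)
      show "(\<lambda>p. {fst p, snd p}) ` ?P1 = {{i, j} | i j. i \<in> ?U \<and> j \<in> ?U \<and> g i j}"
      proof
        show "(\<lambda>p. {fst p, snd p}) ` ?P1 \<subseteq> {{i, j} | i j. i \<in> ?U \<and> j \<in> ?U \<and> g i j}" by force
        show "{{i, j} | i j. i \<in> ?U \<and> j \<in> ?U \<and> g i j} \<subseteq> (\<lambda>p. {fst p, snd p}) ` ?P1"
        proof clarify
          fix i j assume ij: "i \<in> ?U" "j \<in> ?U" "g i j"
          then have "i \<noteq> j" using irr by auto
          show "{i, j} \<in> (\<lambda>p. {fst p, snd p}) ` ?P1"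
          proof (cases "i < j")
            case True
            then show ?thesis using ij by (intro image_eqI[of _ _ "(i, j)"]) auto
          next
            case False
            then have "j < i" using \<open>i \<noteq> j\<close> by simp
            then show ?thesis using ij sym[of i j] by (intro image_eqI[of _ _ "(j, i)"]) auto
          qed
        qed
      qed
    qed
    then show ?thesis unfolding num_edges_def by (rule bij_betw_same_card)
  qed
  finally show ?thesis by simp
qed

lemma alg:
  fixes nn t N SA SB g M :: real
  assumes "nn > 1" "0 < t" "t < nn" "N > 0"
  shows "((((SA+SB)*(t/nn*N) + g * (M * (t*(t-1)/(nn*(nn-1))*N)))/t - (N*SA - SA*(t/nn*N) + g*(M*(t/nn*N)) - g*(M*(t*(t-1)/(nn*(nn-1))*N)))/(nn - t))/N) - SB/nn = - g * M / (nn*(nn-1))"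
proof -
  have h: "nn - t > 0" "nn - 1 > 0" "nn > 0" "t > 0" "N > 0" using assms by auto
  have A: "((SA+SB)*(t/nn*N) + g * (M * (t*(t-1)/(nn*(nn-1))*N)))/t = N * ((SA+SB)/nn + g*M*(t-1)/(nn*(nn-1)))"
    using h by (simp add: field_simps)
  have B1: "N*SA - SA*(t/nn*N) + g*(M*(t/nn*N)) - g*(M*(t*(t-1)/(nn*(nn-1))*N)) = (nn - t) * (N * (SA/nn + g*M*t/(nn*(nn-1))))"
    using h by (simp add: field_simps)
  have B: "(N*SA - SA*(t/nn*N) + g*(M*(t/nn*N)) - g*(M*(t*(t-1)/(nn*(nn-1))*N)))/(nn - t) = N * (SA/nn + g*M*t/(nn*(nn-1)))"
    unfolding B1 using h by simp
  have C: "\<And>D. D \<noteq> 0 \<Longrightarrow> (N * ((SA+SB)/nn + g*M*(t-1)/D) - N * (SA/nn + g*M*t/D))/N - SB/nn = - g * M / D"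
    using h by (simp add: field_simps)
  have "nn*(nn-1) \<noteq> 0" using h by simp
  show ?thesis unfolding A B by (rule C) fact
qed

lemma E_sum:
  assumes "nt \<le> n"
  shows "measure_pmf.expectation (crd n nt) f = (\<Sum>A\<in>subs n nt. f (ind A)) / real (n choose nt)"
proof -
  have eq: "assignments n nt = ind ` subs n nt" unfolding subs_def by (rule assignments_eq)
  have c: "card (subs n nt) > 0" using assms by (simp add: card_subs)
  then have ne: "subs n nt \<noteq> {}" by auto
  have inj: "inj_on ind (subs n nt)" using inj_ind by (simp add: inj_on_def inj_def)
  have "measure_pmf.expectation (crd n nt) f = sum f (assignments n nt) / card (assignments n nt)"
    unfolding crd_def eq by (rule integral_pmf_of_set) (use ne finite_subs in auto)
  also have "\<dots> = (\<Sum>A\<in>subs n nt. f (ind A)) / real (n choose nt)"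
    unfolding eq using inj by (simp add: sum.reindex card_image card_subs)
  finally show ?thesis .
qed

theorem proposition12:
  fixes n nt :: nat and g :: "nat \<Rightarrow> nat \<Rightarrow> bool"
    and \<alpha> \<beta> :: "nat \<Rightarrow> real" and \<gamma> :: real
    and Y :: "nat \<Rightarrow> (nat \<Rightarrow> real) \<Rightarrow> real"
  assumes "n \<ge> 2"
    and "simple_graph n g"
    and "1 \<le> nt" and "nt \<le> n - 1"
    and "\<And>i z. Y i z = \<alpha> i + \<beta> i * z i + \<gamma> * (\<Sum>j\<in>{1..n}. adj g i j * z j)"
  shows "measure_pmf.expectation (crd n nt) (beta_naive n Y) - DTE n Y
           = - \<gamma> * (2 * real (num_edges n g)) / (real n * (real n - 1))"
proof -
  note Yd = assms(5)
  define U where "U = {1..n}"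
  define N where "N = real (n choose nt)"
  define SA where "SA = (\<Sum>i\<in>U. \<alpha> i)"
  define SB where "SB = (\<Sum>i\<in>U. \<beta> i)"
  define M where "M = (\<Sum>i\<in>U. \<Sum>j\<in>U. adj g i j)"
  define a where "a i j = adj g i j" for i j
  define p1 where "p1 = real nt / real n * N"
  define p2 where "p2 = real nt * (real nt - 1) / (real n * (real n - 1)) * N"
  have ntn: "nt \<le> n" "nt < n" using assms by auto
  have Npos: "N > 0" unfolding N_def using ntn by simp
  have nr: "real n > 1" using assms by simp
  have irr: "\<And>i. i \<in> U \<Longrightarrow> adj g i i = 0"
    using assms(2) unfolding simple_graph_def adj_def U_def by auto
  have S1: "(\<Sum>A\<in>subs n nt. ind A i) = p1" if "i \<in> U" for i
    using K1[of i n nt] that assms nr unfolding p1_def N_def U_def by (simp add: field_simps)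
  have S2: "(\<Sum>A\<in>subs n nt. ind A i * ind A j) = p2" if "i \<in> U" "j \<in> U" "i \<noteq> j" for i j
  proof -
    have "real n * (real n - 1) > 0" using nr by simp
    then show ?thesis
      using K2[of i n j nt] that assms unfolding p2_def N_def U_def by (simp add: field_simps)
  qed
  define L1 where "L1 A = (\<Sum>i\<in>U. (\<alpha> i + \<beta> i) * ind A i)" for A
  define L2 where "L2 A = (\<Sum>i\<in>U. \<alpha> i * ind A i)" for A
  define Q where "Q A = (\<Sum>i\<in>U. \<Sum>j\<in>U. a i j * (ind A i * ind A j))" for A
  define R where "R A = (\<Sum>i\<in>U. \<Sum>j\<in>U. a i j * ind A j)" for A
  have F: "beta_naive n Y (ind A) = (L1 A + \<gamma> * Q A) / real nt - (SA - L2 A + \<gamma> * R A - \<gamma> * Q A) / (real n - real nt)"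
    if A: "A \<in> subs n nt" for A
  proof -
    have AU: "A \<subseteq> U" "card A = nt" using A unfolding subs_def U_def by auto
    have fU: "finite U" unfolding U_def by simp
    have s1: "(\<Sum>i\<in>U. ind A i) = real nt"
    proof -
      have "(\<Sum>i\<in>U. ind A i) = (\<Sum>i\<in>U. if i \<in> A then 1 else 0)" by (simp add: ind_def)
      also have "\<dots> = real (card (U \<inter> A))" using fU by (simp add: sum.If_cases)
      also have "U \<inter> A = A" using AU by auto
      finally show ?thesis using AU by simp
    qed
    have s0: "(\<Sum>i\<in>U. 1 - ind A i) = real n - real nt"
      using s1 by (simp add: sum_subtractf U_def)
    have p1: "Y i (ind A) * ind A i = (\<alpha> i + \<beta> i) * ind A i + \<gamma> * (\<Sum>j\<in>U. a i j * (ind A i * ind A j))" for i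
      unfolding Yd U_def a_def by (cases "i \<in> A") (simp_all add: ind_def)
    have p0: "Y i (ind A) * (1 - ind A i) = \<alpha> i - \<alpha> i * ind A i + \<gamma> * (\<Sum>j\<in>U. a i j * ind A j) - \<gamma> * (\<Sum>j\<in>U. a i j * (ind A i * ind A j))" for i
      unfolding Yd U_def a_def by (cases "i \<in> A") (simp_all add: ind_def)
    have t1: "(\<Sum>i\<in>U. Y i (ind A) * ind A i) = L1 A + \<gamma> * Q A"
      unfolding p1 L1_def Q_def by (simp add: sum.distrib sum_distrib_left)
    have t0: "(\<Sum>i\<in>U. Y i (ind A) * (1 - ind A i)) = SA - L2 A + \<gamma> * R A - \<gamma> * Q A"
      unfolding p0 L2_def Q_def R_def SA_def by (simp add: sum.distrib sum_subtractf sum_distrib_left)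
    show ?thesis unfolding beta_naive_def using t1 t0 s1 s0 unfolding U_def by simp
  qed
  have sL1: "(\<Sum>A\<in>subs n nt. L1 A) = (SA + SB) * p1"
  proof -
    have "(\<Sum>A\<in>subs n nt. L1 A) = (\<Sum>i\<in>U. (\<alpha> i + \<beta> i) * (\<Sum>A\<in>subs n nt. ind A i))"
      unfolding L1_def by (simp add: sum_distrib_left sum.swap[of _ U])
    also have "\<dots> = (\<Sum>i\<in>U. (\<alpha> i + \<beta> i) * p1)" by (rule sum.cong) (simp_all add: S1)
    finally show ?thesis by (simp add: SA_def SB_def sum.distrib sum_distrib_right[symmetric])
  qed
  have sL2: "(\<Sum>A\<in>subs n nt. L2 A) = SA * p1"
  proof -
    have "(\<Sum>A\<in>subs n nt. L2 A) = (\<Sum>i\<in>U. \<alpha> i * (\<Sum>A\<in>subs n nt. ind A i))"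
      unfolding L2_def by (simp add: sum_distrib_left sum.swap[of _ U])
    also have "\<dots> = (\<Sum>i\<in>U. \<alpha> i * p1)" by (rule sum.cong) (simp_all add: S1)
    finally show ?thesis by (simp add: SA_def sum_distrib_right)
  qed
  have sR: "(\<Sum>A\<in>subs n nt. R A) = M * p1"
  proof -
    have "(\<Sum>A\<in>subs n nt. R A) = (\<Sum>A\<in>subs n nt. \<Sum>i\<in>U. \<Sum>j\<in>U. a i j * ind A j)"
      by (simp add: R_def)
    also have "\<dots> = (\<Sum>i\<in>U. \<Sum>A\<in>subs n nt. \<Sum>j\<in>U. a i j * ind A j)"
      by (rule sum.swap)
    also have "\<dots> = (\<Sum>i\<in>U. \<Sum>j\<in>U. \<Sum>A\<in>subs n nt. a i j * ind A j)"
      by (intro sum.cong refl) (rule sum.swap)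
    also have "\<dots> = (\<Sum>i\<in>U. \<Sum>j\<in>U. a i j * (\<Sum>A\<in>subs n nt. ind A j))"
      by (simp add: sum_distrib_left)
    also have "\<dots> = (\<Sum>i\<in>U. \<Sum>j\<in>U. a i j * p1)" by (intro sum.cong) (simp_all add: S1)
    finally show ?thesis by (simp add: M_def a_def sum_distrib_right)
  qed
  have sQ: "(\<Sum>A\<in>subs n nt. Q A) = M * p2"
  proof -
    have "(\<Sum>A\<in>subs n nt. Q A) = (\<Sum>A\<in>subs n nt. \<Sum>i\<in>U. \<Sum>j\<in>U. a i j * (ind A i * ind A j))"
      by (simp add: Q_def)
    also have "\<dots> = (\<Sum>i\<in>U. \<Sum>A\<in>subs n nt. \<Sum>j\<in>U. a i j * (ind A i * ind A j))"
      by (rule sum.swap)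
    also have "\<dots> = (\<Sum>i\<in>U. \<Sum>j\<in>U. \<Sum>A\<in>subs n nt. a i j * (ind A i * ind A j))"
      by (intro sum.cong refl) (rule sum.swap)
    also have "\<dots> = (\<Sum>i\<in>U. \<Sum>j\<in>U. a i j * (\<Sum>A\<in>subs n nt. ind A i * ind A j))"
      by (simp add: sum_distrib_left)
    also have "\<dots> = (\<Sum>i\<in>U. \<Sum>j\<in>U. a i j * p2)"
    proof (intro sum.cong refl)
      fix i j assume "i \<in> U" "j \<in> U"
      then show "a i j * (\<Sum>A\<in>subs n nt. ind A i * ind A j) = a i j * p2"
        by (cases "i = j") (simp_all add: S2 a_def irr)
    qed
    finally show ?thesis by (simp add: M_def a_def sum_distrib_right)
  qed
  have E: "measure_pmf.expectation (crd n nt) (beta_naive n Y)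
      = (((SA + SB) * p1 + \<gamma> * (M * p2)) / real nt - (N * SA - SA * p1 + \<gamma> * (M * p1) - \<gamma> * (M * p2)) / (real n - real nt)) / N"
  proof -
    have "measure_pmf.expectation (crd n nt) (beta_naive n Y) = (\<Sum>A\<in>subs n nt. beta_naive n Y (ind A)) / N"
      unfolding N_def by (rule E_sum[OF ntn(1)])
    also have "(\<Sum>A\<in>subs n nt. beta_naive n Y (ind A)) = (\<Sum>A\<in>subs n nt. (L1 A + \<gamma> * Q A) / real nt - (SA - L2 A + \<gamma> * R A - \<gamma> * Q A) / (real n - real nt))"
      by (rule sum.cong) (simp_all add: F)
    also have "\<dots> = ((\<Sum>A\<in>subs n nt. L1 A) + \<gamma> * (\<Sum>A\<in>subs n nt. Q A)) / real nt - (real (card (subs n nt)) * SA - (\<Sum>A\<in>subs n nt. L2 A) + \<gamma> * (\<Sum>A\<in>subs n nt. R A) - \<gamma> * (\<Sum>A\<in>subs n nt. Q A)) / (real n - real nt)"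
      by (simp add: sum_subtractf sum.distrib sum_divide_distrib[symmetric] sum_distrib_left)
    finally show ?thesis unfolding sL1 sL2 sR sQ card_subs N_def by simp
  qed
  have D: "DTE n Y = SB / real n"
  proof -
    have "Y i (\<lambda>j. if j = i then 1 else 0) - Y i (\<lambda>j. 0) = \<beta> i" if "i \<in> U" for i
    proof -
      have "(\<Sum>j\<in>{1..n}. adj g i j * (if j = i then 1 else 0)) = (\<Sum>j\<in>{1..n}. if j = i then adj g i j else 0)"
        by (rule sum.cong) auto
      also have "\<dots> = 0" using that irr by (simp add: U_def)
      finally show ?thesis unfolding Yd by simp
    qed
    then show ?thesis unfolding DTE_def SB_def U_def by simp
  qed
  have Me: "M = 2 * real (num_edges n g)" unfolding M_def U_def by (rule edges_sum[OF assms(2)])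
  have "real nt > 0" "real nt < real n" using assms ntn by auto
  then have "measure_pmf.expectation (crd n nt) (beta_naive n Y) - DTE n Y = - \<gamma> * M / (real n * (real n - 1))"
    unfolding E D p1_def p2_def using alg[OF nr _ _ Npos, of "real nt" SA SB \<gamma> M] by simp
  then show ?thesis unfolding Me by simp
qed

end
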